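(* Let $N\ge2$ and ${\bm{p}}\in\Delta_K$ with $p_1\ge\dots\ge p_K>0$. Let $L_N({\bm{p}},{\bm{q}})=\sum_kp_k(1-q_k)^N$, let ${\bm{q}}^*(N)$ be its minimizer over ${\bm{q}}\in\Delta_K$, let $\beta_N>0$ be such that $q_k^*(N)=\max\{0,1-\beta_Np_k^{-1/(N-1)}\}$ for all $k$, and $K_N:=\max\{k:q_k^*(N)\ne0\}$. Then $$L^{\mathrm{same}}({\bm{p}}):=L_N({\bm{p}},{\bm{p}})=\sum_{k=1}^Kp_k(1-p_k)^N,$$ $$L^*({\bm{p}}):=L_N({\bm{p}},{\bm{q}}^*(N))=\sum_{k=K_N+1}^Kp_k+(K_N-1)\beta_N^{N-1}\in\left[\sum_{k=K_N+1}^Kp_k+(K_N-1)p_{K_N+1},\ \sum_{k=K_N+1}^Kp_k+(K_N-1)p_{K_N}\right),$$ with the convention $p_{K+1}=0$.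
   Context: $\Delta_K=\{{\bm{r}}\in\mathbb{R}^K:{\bm{r}}\ge0,\ \sum_kr_k=1\}$. $L_N$ is the expected test loss of the memorization model (error $1$ on task $k$ iff no sample from task $k$ among $N$ i.i.d. training samples from the mixture with proportions ${\bm{q}}$). *)

theory Defs
  imports Complex_Main
begin

text \<open>Probability simplex Delta_K, with vectors represented as functions nat => real
  supported on the index set {1..K} (entries outside {1..K} are zero).\<close>
definition simplex :: "nat \<Rightarrow> (nat \<Rightarrow> real) set" where
  "simplex K = {r. (\<forall>k. 0 \<le> r k) \<and> (\<forall>k. k \<notin> {1..K} \<longrightarrow> r k = 0) \<and> (\<Sum>k=1..K. r k) = 1}"

definition LN :: "nat \<Rightarrow> nat \<Rightarrow> (nat \<Rightarrow> real) \<Rightarrow> (nat \<Rightarrow> real) \<Rightarrow> real" where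
  "LN K N p q = (\<Sum>k=1..K. p k * (1 - q k) ^ N)"

definition last_nonzero :: "nat \<Rightarrow> (nat \<Rightarrow> real) \<Rightarrow> nat" where
  "last_nonzero K q = Max {k\<in>{1..K}. q k \<noteq> 0}"

end

theory Submission
  imports Defs
begin

theorem lemmaA8:
  fixes K N :: nat and p qs :: "nat \<Rightarrow> real" and \<beta> :: real
  assumes "N \<ge> 2"
    and "p \<in> simplex K"
    and "\<forall>k\<in>{1..K}. p k > 0"
    and "\<forall>i j. 1 \<le> i \<longrightarrow> i \<le> j \<longrightarrow> j \<le> K \<longrightarrow> p j \<le> p i"
    and "qs \<in> simplex K"
    and "\<forall>q\<in>simplex K. LN K N p qs \<le> LN K N p q"
    and "\<beta> > 0"
    and "\<forall>k\<in>{1..K}. qs k = max 0 (1 - \<beta> * p k powr (- 1 / (real N - 1)))"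
  shows "LN K N p p = (\<Sum>k=1..K. p k * (1 - p k) ^ N)
    \<and> LN K N p qs = (\<Sum>k=last_nonzero K qs + 1..K. p k)
                       + (real (last_nonzero K qs) - 1) * \<beta> ^ (N - 1)
    \<and> (\<Sum>k=last_nonzero K qs + 1..K. p k)
           + (real (last_nonzero K qs) - 1) * p (last_nonzero K qs + 1) \<le> LN K N p qs
    \<and> LN K N p qs < (\<Sum>k=last_nonzero K qs + 1..K. p k)
           + (real (last_nonzero K qs) - 1) * p (last_nonzero K qs)"
proof -
  define e where "e = - 1 / (real N - 1)"
  define r where "r k = p k powr e" for k
  define M where "M = last_nonzero K qs"
  define S where "S = {k\<in>{1..K}. qs k \<noteq> 0}"
  have Npos: "real N - 1 > 0" using assms(1) by simp
  have ppos: "\<And>k. k \<in> {1..K} \<Longrightarrow> p k > 0" using assms(3) by blast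
  have rpos: "\<And>k. k \<in> {1..K} \<Longrightarrow> r k > 0" unfolding r_def using ppos by (metis powr_gt_zero less_irrefl)
  have qsk: "\<And>k. k \<in> {1..K} \<Longrightarrow> qs k = max 0 (1 - \<beta> * r k)"
    using assms(8) unfolding r_def e_def by blast
  have qs0: "\<And>k. k \<notin> {1..K} \<Longrightarrow> qs k = 0" using assms(5) unfolding simplex_def by blast
  have p0: "\<And>k. k \<notin> {1..K} \<Longrightarrow> p k = 0" using assms(2) unfolding simplex_def by blast
  have qsum: "(\<Sum>k=1..K. qs k) = 1" using assms(5) unfolding simplex_def by blast
  have inS: "\<And>k. k \<in> S \<longleftrightarrow> k \<in> {1..K} \<and> \<beta> * r k < 1"
    unfolding S_def using qsk by (auto simp: max_def split: if_splits)
  have rmono: "r i \<le> r j" if "1 \<le> i" "i \<le> j" "j \<le> K" for i j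
  proof -
    have "p j \<le> p i" using assms(4) that by blast
    moreover have "p j > 0" using ppos that by simp
    moreover have "e \<le> 0" unfolding e_def using Npos by simp
    ultimately show ?thesis unfolding r_def by (simp add: powr_mono2')
  qed
  have Sne: "S \<noteq> {}"
  proof
    assume "S = {}"
    hence "\<And>k. k \<in> {1..K} \<Longrightarrow> qs k = 0" unfolding S_def by blast
    hence "(\<Sum>k=1..K. qs k) = 0" by simp
    thus False using qsum by simp
  qed
  have Sfin: "finite S" unfolding S_def by simp
  have MS: "M \<in> S" unfolding M_def last_nonzero_def S_def[symmetric] using Sne Sfin by simp
  have Mmax: "\<And>k. k \<in> S \<Longrightarrow> k \<le> M" unfolding M_def last_nonzero_def S_def[symmetric]
    using Sfin by simp
  have M1: "1 \<le> M" "M \<le> K" using MS unfolding S_def by auto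
  have Seq: "S = {1..M}"
  proof
    show "S \<subseteq> {1..M}" using Mmax inS by auto
    show "{1..M} \<subseteq> S"
    proof
      fix k assume k: "k \<in> {1..M}"
      have "\<beta> * r k \<le> \<beta> * r M" using rmono[of k M] k M1 assms(7) by (simp add: mult_left_mono)
      thus "k \<in> S" using inS[of M] inS[of k] MS k M1 by auto
    qed
  qed
  have qlow: "\<And>k. k \<in> {1..M} \<Longrightarrow> qs k = 1 - \<beta> * r k"
    using Seq inS qsk by (auto simp: max_def)
  have qhigh: "\<And>k. k \<in> {M+1..K} \<Longrightarrow> qs k = 0"
  proof -
    fix k assume k: "k \<in> {M+1..K}"
    hence "k \<notin> S" using Seq by auto
    thus "qs k = 0" using k M1 unfolding S_def by auto
  qed
  have split: "\<And>f :: nat \<Rightarrow> real. (\<Sum>k=1..K. f k) = (\<Sum>k=1..M. f k) + (\<Sum>k=M+1..K. f k)"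
  proof -
    fix f :: "nat \<Rightarrow> real"
    obtain d where d: "K = M + d" using M1 le_Suc_ex by blast
    show "(\<Sum>k=1..K. f k) = (\<Sum>k=1..M. f k) + (\<Sum>k=M+1..K. f k)"
      unfolding d by (rule sum.ub_add_nat) simp
  qed
  have "(\<Sum>k=1..K. qs k) = (\<Sum>k=1..M. 1 - \<beta> * r k)"
    using split[of qs] qlow qhigh by simp
  also have "\<dots> = real M - \<beta> * (\<Sum>k=1..M. r k)"
    by (simp add: sum_subtractf sum_distrib_left)
  finally have sumeq: "\<beta> * (\<Sum>k=1..M. r k) = real M - 1" using qsum by simp
  have rsumpos: "(\<Sum>k=1..M. r k) > 0"
    by (rule sum_pos) (use M1 rpos in auto)
  have M2: "M \<ge> 2"
  proof -
    have "\<beta> * (\<Sum>k=1..M. r k) > 0" using rsumpos assms(7) by simp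
    thus ?thesis using sumeq by simp
  qed
  have rpow: "r k ^ (N - 1) = 1 / p k" if "k \<in> {1..K}" for k
  proof -
    have "r k ^ (N - 1) = p k powr (e * real (N - 1))"
      unfolding r_def using ppos[OF that] by (simp add: powr_realpow[symmetric] powr_powr)
    also have "e * real (N - 1) = -1" unfolding e_def using assms(1) Npos
      by (simp add: of_nat_diff)
    finally show ?thesis using ppos[OF that] by (simp add: powr_minus_divide)
  qed
  have pterm: "p k * (1 - qs k) ^ N = \<beta> ^ N * r k" if "k \<in> {1..M}" for k
  proof -
    have kK: "k \<in> {1..K}" using that M1 by auto
    have "N = Suc (N - 1)" using assms(1) by simp
    hence "(\<beta> * r k) ^ N = \<beta> ^ N * (r k * r k ^ (N - 1))"
      by (metis power_Suc power_mult_distrib)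
    moreover have "1 - qs k = \<beta> * r k" using qlow[OF that] by simp
    ultimately have "p k * (1 - qs k) ^ N = \<beta> ^ N * r k * (p k * r k ^ (N - 1))"
      by (simp only:) (simp add: algebra_simps)
    also have "p k * r k ^ (N - 1) = 1" using rpow[OF kK] ppos[OF kK] by simp
    finally show ?thesis by simp
  qed
  have LNeq: "LN K N p qs = (\<Sum>k=M+1..K. p k) + (real M - 1) * \<beta> ^ (N - 1)"
  proof -
    have "LN K N p qs = (\<Sum>k=1..M. \<beta> ^ N * r k) + (\<Sum>k=M+1..K. p k)"
      unfolding LN_def using split[of "\<lambda>k. p k * (1 - qs k) ^ N"] pterm qhigh by simp
    also have "(\<Sum>k=1..M. \<beta> ^ N * r k) = \<beta> ^ (N - 1) * (\<beta> * (\<Sum>k=1..M. r k))"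
    proof -
      have "\<beta> ^ N = \<beta> ^ Suc (N - 1)" using assms(1) by simp
      hence "\<beta> ^ N = \<beta> ^ (N - 1) * \<beta>" by (simp only: power_Suc2)
      thus ?thesis by (simp add: sum_distrib_left mult.assoc)
    qed
    finally show ?thesis using sumeq by simp
  qed
  have bpow: "\<beta> ^ (N - 1) * r k ^ (N - 1) = (\<beta> * r k) ^ (N - 1)" for k
    by (simp add: power_mult_distrib)
  have upper: "\<beta> ^ (N - 1) < p M"
  proof -
    have MK: "M \<in> {1..K}" using M1 by auto
    have "\<beta> * r M < 1" using inS MS by blast
    moreover have "\<beta> * r M \<ge> 0" using rpos[OF MK] assms(7) by simp
    ultimately have "(\<beta> * r M) ^ (N - 1) < 1" using assms(1)
      by (subst power_less_one_iff) auto
    hence "\<beta> ^ (N - 1) * (1 / p M) < 1" using bpow[of M] rpow[OF MK] by simp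
    thus ?thesis using ppos[OF MK] by (simp add: field_simps)
  qed
  have lower: "p (M + 1) \<le> \<beta> ^ (N - 1)"
  proof (cases "M + 1 \<le> K")
    case False
    hence "p (M+1) = 0" using p0 by simp
    thus ?thesis using assms(7) by simp
  next
    case True
    hence MK: "M + 1 \<in> {1..K}" by simp
    have "M + 1 \<notin> S" using Seq by simp
    hence "\<beta> * r (M+1) \<ge> 1" using inS MK by auto
    hence "(\<beta> * r (M+1)) ^ (N - 1) \<ge> 1" by (simp add: one_le_power)
    hence "\<beta> ^ (N - 1) * (1 / p (M+1)) \<ge> 1" using bpow[of "M+1"] rpow[OF MK] by simp
    thus ?thesis using ppos[OF MK] by (simp add: field_simps)
  qed
  have Mr: "real M - 1 > 0" using M2 by simp
  show ?thesis
    unfolding M_def[symmetric] LNeq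
    using mult_strict_left_mono[OF upper Mr] mult_left_mono[OF lower, of "real M - 1"] Mr
    by (simp add: LN_def)
qed

end
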